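(* Let $B \in \mathbb{R}^{n \times m}$, $c \in \mathbb{R}^m_>$, and let $C = C_1 \times \cdots \times C_\ell \subseteq \mathbb{R}^m_>$ be a nonempty cone with cones $C_i \subseteq \mathbb{R}^{m_i}_>$, $m_1+\cdots+m_\ell=m$. With $P$, $L$, $M$, $I$, $d$ as in the context, let $M^*$ be any generalized inverse of $M$ ($MM^*M=M$) and $E = I M^*$. If $d = 0$, then \[ Z_c := \{x\in\mathbb{R}^n_> \mid (c\circ x^B)\in C\} = \{ (y\circ c^{-1})^E \mid y \in P\} \circ e^{L^\perp}; \] in particular, $Z_c \neq \emptyset$ for every $c \in \mathbb{R}^m_>$. Moreover, $Z_c$ consists of exactly one point if and only if $\dim P = 0$ and $\dim L^\perp = 0$.
   Context: Notation: for $x\in\mathbb{R}^n_>$, $y\in\mathbb{R}^n$, $x^y=\prod_i x_i^{y_i}$; for $Y=(y^1,\ldots,y^m)$, $(x^Y)_j=x^{y^j}$; $\circ$ is the componentwise product, $c^{-1}$ componentwise inverse, $S\circ e^{V}=\{s\circ e^v\mid s\in S, v\in V\}$. A cone is a set closed under positive scaling. The partition splits indices into $\ell$ consecutive classes, $B=(B_1\ \cdots\ B_\ell)$. $\Delta=\Delta_{m_1-1}\times\cdots\times\Delta_{m_\ell-1}$ with $\Delta_{m_i-1}=\{y\in\mathbb{R}^{m_i}_{\ge}\mid\sum_j y_j=1\}$; $P=C\cap\Delta$ (its dimension is that of its affine hull). $I_k=\begin{pmatrix}\mathrm{id}_{k-1}\\-1_{k-1}^{\mathsf T}\end{pmatrix}$,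 $I=\mathrm{diag}(I_{m_1},\ldots,I_{m_\ell})\in\mathbb{R}^{m\times(m-\ell)}$, $M=BI$, $L=\operatorname{im}M$, $d=\dim\ker M$. *)

theory Defs
  imports Complex_Main "Jordan_Normal_Form.Matrix_Kernel"
begin

(* The partition of the m indices into l consecutive classes is given by the list ms
   of class sizes [m_1,...,m_l]; m = sum_list ms, l = length ms. *)

definition pos_vecs :: "nat \<Rightarrow> real vec set" where
  "pos_vecs k = {x \<in> carrier_vec k. \<forall>i<k. x $ i > 0}"

definition is_cone :: "real vec set \<Rightarrow> bool" where
  "is_cone S \<longleftrightarrow> (\<forall>x\<in>S. \<forall>t::real. t > 0 \<longrightarrow> t \<cdot>\<^sub>v x \<in> S)"

definition had :: "real vec \<Rightarrow> real vec \<Rightarrow> real vec" where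
  "had x y = vec (dim_vec x) (\<lambda>i. x $ i * y $ i)"

definition vinv :: "real vec \<Rightarrow> real vec" where
  "vinv c = map_vec inverse c"

definition vexp :: "real vec \<Rightarrow> real vec" where
  "vexp v = map_vec exp v"

definition vpow :: "real vec \<Rightarrow> real mat \<Rightarrow> real vec" where
  "vpow x Y = vec (dim_col Y) (\<lambda>j. \<Prod>i<dim_vec x. x $ i powr (Y $$ (i, j)))"

definition offset :: "nat list \<Rightarrow> nat \<Rightarrow> nat" where
  "offset ms i = sum_list (take i ms)"

definition block :: "nat list \<Rightarrow> real vec \<Rightarrow> nat \<Rightarrow> real vec" where
  "block ms y i = vec (ms ! i) (\<lambda>j. y $ (offset ms i + j))"

definition prod_set :: "nat list \<Rightarrow> (nat \<Rightarrow> real vec set) \<Rightarrow> real vec set" where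
  "prod_set ms Cs = {y \<in> carrier_vec (sum_list ms). \<forall>i<length ms. block ms y i \<in> Cs i}"

definition simplex :: "nat \<Rightarrow> real vec set" where
  "simplex k = {y \<in> carrier_vec k. (\<forall>j<k. y $ j \<ge> 0) \<and> (\<Sum>j<k. y $ j) = 1}"

definition Delta :: "nat list \<Rightarrow> real vec set" where
  "Delta ms = prod_set ms (\<lambda>i. simplex (ms ! i))"

definition Pset :: "nat list \<Rightarrow> (nat \<Rightarrow> real vec set) \<Rightarrow> real vec set" where
  "Pset ms Cs = prod_set ms Cs \<inter> Delta ms"

definition Ik :: "nat \<Rightarrow> real mat" where
  "Ik k = mat k (k - 1) (\<lambda>(i, j). if i = k - 1 then -1 else if i = j then 1 else 0)"

definition Imat :: "nat list \<Rightarrow> real mat" where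
  "Imat ms = diag_block_mat (map Ik ms)"

definition Mmat :: "real mat \<Rightarrow> nat list \<Rightarrow> real mat" where
  "Mmat B ms = B * Imat ms"

definition Lspace :: "real mat \<Rightarrow> nat list \<Rightarrow> real vec set" where
  "Lspace B ms = {Mmat B ms *\<^sub>v z | z. z \<in> carrier_vec (sum_list ms - length ms)}"

definition orth_compl :: "nat \<Rightarrow> real vec set \<Rightarrow> real vec set" where
  "orth_compl n W = {v \<in> carrier_vec n. \<forall>w\<in>W. v \<bullet> w = 0}"

definition subspace_dim :: "nat \<Rightarrow> real vec set \<Rightarrow> nat" where
  "subspace_dim n W = vectorspace.dim class_ring ((module_vec TYPE(real) n)\<lparr>carrier := W\<rparr>)"

definition aff_hull_vec :: "nat \<Rightarrow> real vec set \<Rightarrow> real vec set" where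
  "aff_hull_vec n S = {v. \<exists>T a. finite T \<and> T \<subseteq> S \<and> T \<noteq> {} \<and> sum a T = 1 \<and>
       v = finsum_vec TYPE(real) n (\<lambda>x. a x \<cdot>\<^sub>v x) T}"

definition aff_dim_vec :: "nat \<Rightarrow> real vec set \<Rightarrow> int" where
  "aff_dim_vec n S = (if S = {} then -1 else
     int (subspace_dim n {x - y | x y. x \<in> aff_hull_vec n S \<and> y \<in> aff_hull_vec n S}))"

definition Zset :: "nat \<Rightarrow> real mat \<Rightarrow> real vec \<Rightarrow> nat list \<Rightarrow> (nat \<Rightarrow> real vec set) \<Rightarrow> real vec set" where
  "Zset n B c ms Cs = {x \<in> pos_vecs n. had c (vpow x B) \<in> prod_set ms Cs}"

end

theory Submission
  imports Defs
begin


lemma offset_0[simp]: "offset ns 0 = 0" unfolding offset_def by simp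
lemma offset_Cons_Suc[simp]: "offset (a # ns) (Suc i) = a + offset ns i" unfolding offset_def by simp

lemma offset_Suc: "i < length ns \<Longrightarrow> offset ns (Suc i) = offset ns i + ns ! i"
  unfolding offset_def by (simp add: take_Suc_conv_app_nth)

lemma offset_mono: "i \<le> j \<Longrightarrow> offset ns i \<le> offset ns j"
  unfolding offset_def
  by (metis append_take_drop_id le_add1 min.absorb_iff2 min_def sum_list_append take_take)

lemma offset_lt: assumes "i < j" "j \<le> length ns" shows "offset ns i + ns ! i \<le> offset ns j"
proof -
  have "offset ns i + ns ! i = offset ns (Suc i)" using assms by (simp add: offset_Suc)
  also have "\<dots> \<le> offset ns j" using assms by (intro offset_mono) auto
  finally show ?thesis .
qed

lemma offset_bound: assumes "i < length ns" "j < ns ! i" shows "offset ns i + j < sum_list ns"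
proof -
  have "offset ns (length ns) = sum_list ns" unfolding offset_def by simp
  with offset_lt[of i "length ns" ns] assms show ?thesis by linarith
qed

lemma decomp: "p < sum_list ns \<Longrightarrow> \<exists>i<length ns. \<exists>j<ns ! i. p = offset ns i + j"
proof (induct ns arbitrary: p)
  case Nil then show ?case by simp
next
  case (Cons a ns)
  show ?case
  proof (cases "p < a")
    case True then show ?thesis by (intro exI[of _ 0]) auto
  next
    case False
    then have "p - a < sum_list ns" using Cons by simp
    from Cons(1)[OF this] obtain i j where "i < length ns" "j < ns ! i" "p - a = offset ns i + j" by auto
    then show ?thesis using False by (intro exI[of _ "Suc i"]) auto
  qed
qed

lemma decomp_unique:
  assumes "i < length ns" "j < ns ! i" "i' < length ns" "j' < ns ! i'"
    and "offset ns i + j = offset ns i' + j'"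
  shows "i = i' \<and> j = j'"
proof -
  have "\<not> i < i'" using offset_lt[of i i' ns] assms by auto
  moreover have "\<not> i' < i" using offset_lt[of i' i ns] assms by auto
  ultimately show ?thesis using assms by auto
qed

lemma diag_block_index:
  assumes "i < length As" "r < dim_row (As ! i)" "i' < length As" "s < dim_col (As ! i')"
  shows "diag_block_mat As $$ (offset (map dim_row As) i + r, offset (map dim_col As) i' + s)
     = (if i = i' then As ! i $$ (r, s) else 0)"
  using assms
proof (induct As arbitrary: i i')
  case Nil then show ?case by simp
next
  case (Cons A As)
  let ?B = "diag_block_mat As"
  have r0: "r < map dim_row (A # As) ! i" using Cons(2,3) by (simp del: list.map)
  have c0: "s < map dim_col (A # As) ! i'" using Cons(4,5) by (simp del: list.map)
  have r: "offset (map dim_row (A # As)) i + r < dim_row A + dim_row ?B"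
    using offset_bound[of i "map dim_row (A # As)" r, OF _ r0] Cons(2) by (simp add: dim_diag_block_mat)
  have c: "offset (map dim_col (A # As)) i' + s < dim_col A + dim_col ?B"
    using offset_bound[of i' "map dim_col (A # As)" s, OF _ c0] Cons(4) by (simp add: dim_diag_block_mat)
  show ?case
  proof (cases i)
    case 0
    then show ?thesis
    proof (cases i')
      case 0 then show ?thesis using \<open>i = 0\<close> r c Cons by (simp add: Let_def)
    next
      case (Suc i2) then show ?thesis using \<open>i = 0\<close> r c Cons by (simp add: Let_def)
    qed
  next
    case (Suc i1)
    then show ?thesis
    proof (cases i')
      case 0 then show ?thesis using \<open>i = Suc i1\<close> r c Cons by (simp add: Let_def)
    next
      case (Suc i2) then show ?thesis using \<open>i = Suc i1\<close> r c Cons(1)[of i1 i2] Cons(2-) by (simp add: Let_def)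
    qed
  qed
qed



lemma Ik_dims[simp]: "dim_row (Ik a) = a" "dim_col (Ik a) = a - 1" unfolding Ik_def by auto

lemma Ik_index: "r < a \<Longrightarrow> s < a - 1 \<Longrightarrow> Ik a $$ (r, s) = (if r = a - 1 then -1 else if r = s then 1 else 0)"
  unfolding Ik_def by auto

lemma map_Ik_dims: "map dim_row (map Ik ms) = ms" "map dim_col (map Ik ms) = map (\<lambda>a. a - 1) ms"
  by (induct ms) auto

lemma Imat_dims: "dim_row (Imat ms) = sum_list ms" "dim_col (Imat ms) = sum_list (map (\<lambda>a. a - 1) ms)"
  unfolding Imat_def dim_diag_block_mat map_Ik_dims by auto

lemma sum_list_minus1: "\<forall>a\<in>set ns. a > 0 \<Longrightarrow> sum_list (map (\<lambda>a. a - 1) ns) = sum_list ns - length ns"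
proof (induct ns)
  case (Cons a ns)
  have "sum_list ns \<ge> length ns" using Cons(2)
    by (induct ns) auto
  then show ?case using Cons by auto
qed simp

lemma Imat_entry:
  assumes "i < length ms" "i' < length ms" "r < ms ! i" "s < ms ! i' - 1"
  shows "Imat ms $$ (offset ms i + r, offset (map (\<lambda>a. a - 1) ms) i' + s) =
    (if i = i' then (if r = ms ! i - 1 then -1 else if r = s then 1 else 0) else 0)"
proof -
  have "Imat ms $$ (offset ms i + r, offset (map (\<lambda>a. a - 1) ms) i' + s) =
    diag_block_mat (map Ik ms) $$ (offset (map dim_row (map Ik ms)) i + r, offset (map dim_col (map Ik ms)) i' + s)"
    unfolding Imat_def map_Ik_dims by simp
  also have "\<dots> = (if i = i' then map Ik ms ! i $$ (r, s) else 0)"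
    using assms by (intro diag_block_index) auto
  also have "\<dots> = (if i = i' then (if r = ms ! i - 1 then -1 else if r = s then 1 else 0) else 0)"
    using assms by (auto simp: Ik_index)
  finally show ?thesis .
qed

lemma Imat_col:
  assumes i: "i < length ms" and s: "s < ms ! i - 1" and p: "p < sum_list ms"
  shows "Imat ms $$ (p, offset (map (\<lambda>a. a - 1) ms) i + s) =
    (if p = offset ms i + s then 1 else 0) - (if p = offset ms i + (ms ! i - 1) then 1 else 0)"
proof -
  from decomp[OF p] obtain i2 r where i2: "i2 < length ms" "r < ms ! i2" and pr: "p = offset ms i2 + r" by auto
  have e: "Imat ms $$ (p, offset (map (\<lambda>a. a - 1) ms) i + s) =
    (if i2 = i then (if r = ms ! i2 - 1 then -1 else if r = s then 1 else 0) else 0)"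
    unfolding pr using Imat_entry[OF i2(1) i i2(2) s] .
  show ?thesis
  proof (cases "i2 = i")
    case True
    then show ?thesis unfolding e using s by (auto simp: pr)
  next
    case False
    have "p \<noteq> offset ms i + s" using decomp_unique[OF i2 i, of s] s False pr by linarith
    moreover have "p \<noteq> offset ms i + (ms ! i - 1)" using decomp_unique[OF i2 i, of "ms ! i - 1"] s False pr by auto
    ultimately show ?thesis unfolding e using False by (auto simp: pr)
  qed
qed

lemma ItA:
  assumes a: "a \<in> carrier_vec (sum_list ms)" and i: "i < length ms" and s: "s < ms ! i - 1"
  shows "(transpose_mat (Imat ms) *\<^sub>v a) $ (offset (map (\<lambda>a. a - 1) ms) i + s)
     = a $ (offset ms i + s) - a $ (offset ms i + (ms ! i - 1))"
proof -
  let ?q = "offset (map (\<lambda>a. a - 1) ms) i + s"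
  let ?m = "sum_list ms"
  have q: "?q < dim_col (Imat ms)" unfolding Imat_dims
    using offset_bound[of i "map (\<lambda>a. a - 1) ms" s] i s by auto
  have P1: "offset ms i + s < ?m" using offset_bound[of i ms s] i s by auto
  have P2: "offset ms i + (ms ! i - 1) < ?m" using offset_bound[of i ms "ms ! i - 1"] i s by auto
  have "(transpose_mat (Imat ms) *\<^sub>v a) $ ?q = col (Imat ms) ?q \<bullet> a"
    using q by (simp add: Imat_dims)
  also have "\<dots> = (\<Sum>p\<in>{0..<?m}. Imat ms $$ (p, ?q) * a $ p)"
    unfolding scalar_prod_def using a q by (simp add: Imat_dims)
  also have "\<dots> = (\<Sum>p\<in>{0..<?m}. (if p = offset ms i + s then a $ p else 0)
       - (if p = offset ms i + (ms ! i - 1) then a $ p else 0))"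
    by (rule sum.cong, simp, subst Imat_col[OF i s], auto)
  also have "\<dots> = a $ (offset ms i + s) - a $ (offset ms i + (ms ! i - 1))"
    unfolding sum_subtractf using P1 P2 by simp
  finally show ?thesis .
qed

definition bconst :: "nat list \<Rightarrow> real vec \<Rightarrow> bool" where
  "bconst ms a \<longleftrightarrow> (\<forall>i<length ms. \<forall>j<ms ! i. a $ (offset ms i + j) = a $ (offset ms i + (ms ! i - 1)))"

lemma K_lemma:
  assumes a: "a \<in> carrier_vec (sum_list ms)" and pos: "\<forall>i<length ms. ms ! i > 0"
  shows "(transpose_mat (Imat ms) *\<^sub>v a = 0\<^sub>v (sum_list ms - length ms)) \<longleftrightarrow> bconst ms a"
proof -
  have sl: "sum_list (map (\<lambda>a. a - 1) ms) = sum_list ms - length ms"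
  proof -
    have "\<forall>a\<in>set ms. 0 < a" using pos by (metis in_set_conv_nth)
    then show ?thesis by (rule sum_list_minus1)
  qed
  show ?thesis
proof
  assume z: "transpose_mat (Imat ms) *\<^sub>v a = 0\<^sub>v (sum_list ms - length ms)"
  show "bconst ms a" unfolding bconst_def
  proof (intro allI impI)
    fix i j assume i: "i < length ms" and j: "j < ms ! i"
    show "a $ (offset ms i + j) = a $ (offset ms i + (ms ! i - 1))"
    proof (cases "j = ms ! i - 1")
      case False
      then have s: "j < ms ! i - 1" using j by auto
      have q: "offset (map (\<lambda>a. a - 1) ms) i + j < sum_list ms - length ms"
        using offset_bound[of i "map (\<lambda>a. a - 1) ms" j] i s sl by auto
      have "(transpose_mat (Imat ms) *\<^sub>v a) $ (offset (map (\<lambda>a. a - 1) ms) i + j) = 0"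
        unfolding z using q by simp
      then show ?thesis using ItA[OF a i s] by simp
    qed simp
  qed
next
  assume b: "bconst ms a"
  show "transpose_mat (Imat ms) *\<^sub>v a = 0\<^sub>v (sum_list ms - length ms)"
  proof (rule eq_vecI)
    show "dim_vec (transpose_mat (Imat ms) *\<^sub>v a) = dim_vec (0\<^sub>v (sum_list ms - length ms))"
      using sl by (simp add: Imat_dims)
    fix q assume "q < dim_vec (0\<^sub>v (sum_list ms - length ms))"
    then have "q < sum_list (map (\<lambda>a. a - 1) ms)" using sl by simp
    from decomp[OF this] obtain i s where i: "i < length ms" and s: "s < ms ! i - 1"
      and qd: "q = offset (map (\<lambda>a. a - 1) ms) i + s" by auto
    show "(transpose_mat (Imat ms) *\<^sub>v a) $ q = 0\<^sub>v (sum_list ms - length ms) $ q"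
      using ItA[OF a i s] b i s \<open>q < dim_vec _\<close> unfolding qd bconst_def by auto
  qed
qed
qed



definition lnv :: "real vec \<Rightarrow> real vec" where "lnv x = map_vec ln x"

lemma pos_vecsD: "x \<in> pos_vecs k \<Longrightarrow> x \<in> carrier_vec k" "x \<in> pos_vecs k \<Longrightarrow> i < k \<Longrightarrow> x $ i > 0"
  unfolding pos_vecs_def by auto

lemma lnv_carrier[simp]: "x \<in> carrier_vec k \<Longrightarrow> lnv x \<in> carrier_vec k" unfolding lnv_def by auto
lemma lnv_dim[simp]: "dim_vec (lnv x) = dim_vec x" unfolding lnv_def by auto
lemma lnv_index[simp]: "i < dim_vec x \<Longrightarrow> lnv x $ i = ln (x $ i)" unfolding lnv_def by auto
lemma vexp_dim[simp]: "dim_vec (vexp x) = dim_vec x" unfolding vexp_def by auto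
lemma vexp_index[simp]: "i < dim_vec x \<Longrightarrow> vexp x $ i = exp (x $ i)" unfolding vexp_def by auto
lemma vexp_carrier[simp]: "x \<in> carrier_vec k \<Longrightarrow> vexp x \<in> carrier_vec k" unfolding vexp_def by auto

lemma vexp_pos: "a \<in> carrier_vec k \<Longrightarrow> vexp a \<in> pos_vecs k"
  unfolding pos_vecs_def by auto

lemma vexp_lnv: "x \<in> pos_vecs k \<Longrightarrow> vexp (lnv x) = x"
  by (intro eq_vecI) (auto simp: pos_vecs_def)

lemma lnv_vexp[simp]: "lnv (vexp a) = a"
  by (intro eq_vecI) auto

lemma vexp_inj: "vexp a = vexp b \<Longrightarrow> a = b"
  by (metis lnv_vexp)

lemma had_vexp: "a \<in> carrier_vec k \<Longrightarrow> b \<in> carrier_vec k \<Longrightarrow> had (vexp a) (vexp b) = vexp (a + b)"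
  unfolding had_def by (intro eq_vecI) (auto simp: exp_add)

lemma had_pos_vexp: "c \<in> pos_vecs k \<Longrightarrow> a \<in> carrier_vec k \<Longrightarrow> had c (vexp a) = vexp (lnv c + a)"
  unfolding had_def by (intro eq_vecI) (auto simp: exp_add pos_vecs_def)

lemma had_vinv_pos: "y \<in> pos_vecs k \<Longrightarrow> c \<in> pos_vecs k \<Longrightarrow> had y (vinv c) \<in> pos_vecs k"
  unfolding had_def vinv_def pos_vecs_def by auto

lemma lnv_had_vinv: "y \<in> pos_vecs k \<Longrightarrow> c \<in> pos_vecs k \<Longrightarrow> lnv (had y (vinv c)) = lnv y - lnv c"
  unfolding had_def vinv_def pos_vecs_def by (intro eq_vecI) (auto simp: ln_mult ln_inverse, (metis less_irrefl)+)

lemma vpow_eq: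
  assumes x: "x \<in> pos_vecs r" and Y: "Y \<in> carrier_mat r p"
  shows "vpow x Y = vexp (transpose_mat Y *\<^sub>v lnv x)"
proof (rule eq_vecI)
  show "dim_vec (vpow x Y) = dim_vec (vexp (transpose_mat Y *\<^sub>v lnv x))"
    using Y unfolding vpow_def by simp
  fix j assume "j < dim_vec (vexp (transpose_mat Y *\<^sub>v lnv x))"
  then have j: "j < p" using Y by simp
  have xc: "x \<in> carrier_vec r" and xp: "\<And>i. i < r \<Longrightarrow> x $ i > 0" using x by (auto simp: pos_vecs_def)
  have "vpow x Y $ j = (\<Prod>i<r. x $ i powr (Y $$ (i, j)))"
    unfolding vpow_def using j Y xc by simp
  also have "\<dots> = (\<Prod>i<r. exp (Y $$ (i, j) * ln (x $ i)))"
    by (rule prod.cong, simp, simp add: powr_def xp less_imp_neq[OF xp, symmetric])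
  also have "\<dots> = exp (\<Sum>i<r. Y $$ (i, j) * ln (x $ i))"
    by (simp add: exp_sum)
  also have "(\<Sum>i<r. Y $$ (i, j) * ln (x $ i)) = (transpose_mat Y *\<^sub>v lnv x) $ j"
    using j Y xc by (simp add: scalar_prod_def lessThan_atLeast0)
  finally show "vpow x Y $ j = vexp (transpose_mat Y *\<^sub>v lnv x) $ j"
    using j Y by simp
qed



lemma block_dim[simp]: "dim_vec (block ms y i) = ms ! i" unfolding block_def by simp
lemma block_index[simp]: "j < ms ! i \<Longrightarrow> block ms y i $ j = y $ (offset ms i + j)" unfolding block_def by simp
lemma block_carrier[simp]: "block ms y i \<in> carrier_vec (ms ! i)" unfolding block_def by simp

lemma prod_set_pos:
  assumes Cs: "\<forall>i<length ms. Cs i \<subseteq> pos_vecs (ms ! i)" and z: "z \<in> prod_set ms Cs"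
  shows "z \<in> pos_vecs (sum_list ms)"
proof -
  have zc: "z \<in> carrier_vec (sum_list ms)" using z unfolding prod_set_def by auto
  { fix p assume p: "p < sum_list ms"
    from decomp[OF p] obtain i j where ij: "i < length ms" "j < ms ! i" and pd: "p = offset ms i + j" by auto
    have "block ms z i \<in> pos_vecs (ms ! i)" using z Cs ij unfolding prod_set_def by auto
    then have "block ms z i $ j > 0" using ij by (auto simp: pos_vecs_def)
    then have "z $ p > 0" using ij pd by simp }
  then show ?thesis using zc unfolding pos_vecs_def by auto
qed

lemma ratio_lemma:
  assumes a: "a \<in> pos_vecs (sum_list ms)" and b: "b \<in> pos_vecs (sum_list ms)"
    and bc: "bconst ms (lnv a - lnv b)" and i: "i < length ms" and j: "j < ms ! i"
  shows "a $ (offset ms i + j) = (a $ (offset ms i + (ms ! i - 1)) / b $ (offset ms i + (ms ! i - 1))) * b $ (offset ms i + j)"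
proof -
  let ?p = "offset ms i + j" and ?L = "offset ms i + (ms ! i - 1)"
  have p: "?p < sum_list ms" using offset_bound[OF i j] .
  have L: "?L < sum_list ms" using offset_bound[OF i, of "ms ! i - 1"] j by auto
  have ac: "a \<in> carrier_vec (sum_list ms)" and bcar: "b \<in> carrier_vec (sum_list ms)"
    using a b by (auto simp: pos_vecs_def)
  have ap: "a $ ?p > 0" "a $ ?L > 0" "b $ ?p > 0" "b $ ?L > 0" using a b p L by (auto simp: pos_vecs_def)
  from bc i j have "(lnv a - lnv b) $ ?p = (lnv a - lnv b) $ ?L" unfolding bconst_def by auto
  then have "ln (a $ ?p) - ln (b $ ?p) = ln (a $ ?L) - ln (b $ ?L)" using p L ac bcar by simp
  then have "ln (a $ ?p / b $ ?p) = ln (a $ ?L / b $ ?L)" using ap by (simp add: ln_div)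
  then have "a $ ?p / b $ ?p = a $ ?L / b $ ?L" using ap by (simp add: ln_inj_iff)
  then show ?thesis using ap by (simp add: field_simps)
qed

lemma lemma_B:
  assumes Cs: "\<forall>i<length ms. Cs i \<subseteq> pos_vecs (ms ! i) \<and> is_cone (Cs i)"
    and y: "y \<in> Pset ms Cs" and z: "z \<in> pos_vecs (sum_list ms)"
    and bc: "bconst ms (lnv z - lnv y)" and ms_pos: "\<forall>i<length ms. ms ! i > 0"
  shows "z \<in> prod_set ms Cs"
proof -
  have yC: "y \<in> prod_set ms Cs" using y unfolding Pset_def by auto
  have yp: "y \<in> pos_vecs (sum_list ms)" using prod_set_pos[OF _ yC] Cs by auto
  have zc: "z \<in> carrier_vec (sum_list ms)" using z by (auto simp: pos_vecs_def)
  { fix i assume i: "i < length ms"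
    let ?L = "offset ms i + (ms ! i - 1)"
    define t where "t = z $ ?L / y $ ?L"
    have "block ms z i = t \<cdot>\<^sub>v block ms y i"
      unfolding t_def by (rule eq_vecI) (auto simp: ratio_lemma[OF z yp bc i])
    moreover have "t > 0"
    proof -
      have L: "?L < sum_list ms" using offset_bound[OF i, of "ms ! i - 1"] ms_pos i by auto
      then show ?thesis unfolding t_def using z yp by (auto simp: pos_vecs_def)
    qed
    moreover have "block ms y i \<in> Cs i" using yC i unfolding prod_set_def by auto
    ultimately have "block ms z i \<in> Cs i" using Cs i unfolding is_cone_def by auto }
  then show ?thesis using zc unfolding prod_set_def by auto
qed



lemma Pset_pos: "\<forall>i<length ms. Cs i \<subseteq> pos_vecs (ms ! i) \<Longrightarrow> y \<in> Pset ms Cs \<Longrightarrow> y \<in> pos_vecs (sum_list ms)"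
  unfolding Pset_def using prod_set_pos by auto

lemma block_sum1: "y \<in> Pset ms Cs \<Longrightarrow> i < length ms \<Longrightarrow> (\<Sum>j<ms ! i. y $ (offset ms i + j)) = 1"
  unfolding Pset_def Delta_def prod_set_def simplex_def by auto

lemma lemma_U:
  assumes Cs: "\<forall>i<length ms. Cs i \<subseteq> pos_vecs (ms ! i)"
    and y1: "y1 \<in> Pset ms Cs" and y2: "y2 \<in> Pset ms Cs"
    and bc: "bconst ms (lnv y1 - lnv y2)"
  shows "y1 = y2"
proof -
  have p1: "y1 \<in> pos_vecs (sum_list ms)" and p2: "y2 \<in> pos_vecs (sum_list ms)" using Pset_pos Cs y1 y2 by auto
  show ?thesis
  proof (rule eq_vecI)
    show "dim_vec y1 = dim_vec y2" using p1 p2 by (auto simp: pos_vecs_def)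
    fix p assume "p < dim_vec y2"
    then have "p < sum_list ms" using p2 by (auto simp: pos_vecs_def)
    from decomp[OF this] obtain i j where i: "i < length ms" and j: "j < ms ! i" and pd: "p = offset ms i + j" by auto
    define t where "t = y1 $ (offset ms i + (ms ! i - 1)) / y2 $ (offset ms i + (ms ! i - 1))"
    have r: "\<And>j. j < ms ! i \<Longrightarrow> y1 $ (offset ms i + j) = t * y2 $ (offset ms i + j)"
      unfolding t_def by (rule ratio_lemma[OF p1 p2 bc i])
    have "1 = (\<Sum>j<ms ! i. y1 $ (offset ms i + j))" using block_sum1[OF y1 i] by simp
    also have "\<dots> = (\<Sum>j<ms ! i. t * y2 $ (offset ms i + j))" by (rule sum.cong) (auto simp: r)
    also have "\<dots> = t" using block_sum1[OF y2 i] by (simp add: sum_distrib_left[symmetric])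
    finally have "t = 1" by simp
    then show "y1 $ p = y2 $ p" using r[OF j] pd by simp
  qed
qed

definition bidx :: "nat list \<Rightarrow> nat \<Rightarrow> nat" where
  "bidx ms p = (SOME i. i < length ms \<and> (\<exists>j<ms ! i. p = offset ms i + j))"

lemma bidx_eq: assumes "i < length ms" "j < ms ! i" shows "bidx ms (offset ms i + j) = i"
proof -
  have ex: "\<exists>i'. i' < length ms \<and> (\<exists>j'<ms ! i'. offset ms i + j = offset ms i' + j')" using assms by auto
  from someI_ex[OF ex] obtain j' where "bidx ms (offset ms i + j) < length ms"
    "j' < ms ! bidx ms (offset ms i + j)" "offset ms i + j = offset ms (bidx ms (offset ms i + j)) + j'"
    unfolding bidx_def by auto
  then show ?thesis using decomp_unique[OF assms] by metis
qed

lemma lemma_A: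
  assumes Cs: "\<forall>i<length ms. Cs i \<subseteq> pos_vecs (ms ! i) \<and> is_cone (Cs i)"
    and ms_pos: "\<forall>i<length ms. ms ! i > 0"
    and z: "z \<in> pos_vecs (sum_list ms)" and zC: "z \<in> prod_set ms Cs"
  shows "\<exists>y\<in>Pset ms Cs. bconst ms (lnv z - lnv y)"
proof -
  let ?m = "sum_list ms"
  define S where "S i = (\<Sum>j<ms ! i. z $ (offset ms i + j))" for i
  define y where "y = vec ?m (\<lambda>p. z $ p / S (bidx ms p))"
  have zc: "z \<in> carrier_vec ?m" using z by (auto simp: pos_vecs_def)
  have Spos: "S i > 0" if i: "i < length ms" for i
    unfolding S_def
  proof (rule sum_pos)
    show "{..<ms ! i} \<noteq> {}" using ms_pos i by auto
    fix j assume "j \<in> {..<ms ! i}"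
    then show "0 < z $ (offset ms i + j)" using z offset_bound[OF i, of j] by (auto simp: pos_vecs_def)
  qed simp
  have yi: "y $ (offset ms i + j) = z $ (offset ms i + j) / S i" if i: "i < length ms" and j: "j < ms ! i" for i j
    unfolding y_def using offset_bound[OF i j] bidx_eq[OF i j] by simp
  have yc: "y \<in> carrier_vec ?m" unfolding y_def by simp
  have blk: "block ms y i = (1 / S i) \<cdot>\<^sub>v block ms z i" if i: "i < length ms" for i
    by (rule eq_vecI) (auto simp: yi[OF i])
  have yC: "y \<in> prod_set ms Cs"
    unfolding prod_set_def
  proof (intro CollectI conjI yc allI impI)
    fix i assume i: "i < length ms"
    have "block ms z i \<in> Cs i" using zC i unfolding prod_set_def by auto
    then show "block ms y i \<in> Cs i" unfolding blk[OF i] using Cs i Spos[OF i] unfolding is_cone_def by auto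
  qed
  have yD: "y \<in> Delta ms"
    unfolding Delta_def prod_set_def
  proof (intro CollectI conjI yc allI impI)
    fix i assume i: "i < length ms"
    have "(\<Sum>j<ms ! i. y $ (offset ms i + j)) = (\<Sum>j<ms ! i. z $ (offset ms i + j) / S i)"
      by (rule sum.cong) (auto simp: yi[OF i])
    also have "\<dots> = S i / S i" unfolding S_def sum_divide_distrib ..
    also have "\<dots> = 1" using Spos[OF i] by simp
    finally have s: "(\<Sum>j<ms ! i. y $ (offset ms i + j)) = 1" .
    have nn: "\<forall>j<ms ! i. 0 \<le> y $ (offset ms i + j)"
      using yi[OF i] Spos[OF i] z offset_bound[OF i] by (auto simp: pos_vecs_def less_imp_le)
    show "block ms y i \<in> simplex (ms ! i)" unfolding simplex_def using s nn by auto
  qed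
  have bc: "bconst ms (lnv z - lnv y)"
    unfolding bconst_def
  proof (intro allI impI)
    fix i j assume i: "i < length ms" and j: "j < ms ! i"
    have L: "ms ! i - 1 < ms ! i" using j by auto
    have e: "(lnv z - lnv y) $ (offset ms i + j') = ln (S i)" if j': "j' < ms ! i" for j'
    proof -
      have zp: "z $ (offset ms i + j') > 0" using z offset_bound[OF i j'] by (auto simp: pos_vecs_def)
      have "(lnv z - lnv y) $ (offset ms i + j') = ln (z $ (offset ms i + j')) - ln (y $ (offset ms i + j'))"
        using offset_bound[OF i j'] zc yc by simp
      also have "\<dots> = ln (S i)" using yi[OF i j'] zp Spos[OF i] by (simp add: ln_div)
      finally show ?thesis .
    qed
    show "(lnv z - lnv y) $ (offset ms i + j) = (lnv z - lnv y) $ (offset ms i + (ms ! i - 1))"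
      using e[OF j] e[OF L] by simp
  qed
  show ?thesis using yC yD bc unfolding Pset_def by auto
qed



lemma subspace_vecI:
  fixes W :: "real vec set"
  assumes sub: "W \<subseteq> carrier_vec n" and z: "0\<^sub>v n \<in> W"
    and add: "\<And>a b. a \<in> W \<Longrightarrow> b \<in> W \<Longrightarrow> a + b \<in> W"
    and sm: "\<And>r a. a \<in> W \<Longrightarrow> r \<cdot>\<^sub>v a \<in> W"
  shows "subspace class_ring W (module_vec TYPE(real) n)"
proof -
  interpret vec_space "TYPE(real)" n .
  show ?thesis unfolding subspace_def
    by (intro conjI vec_vs submodule.intro vec_module) (use assms in auto)
qed

lemma subspace_fin_dim:
  fixes W :: "real vec set"
  assumes S: "subspace class_ring W (module_vec TYPE(real) n)"
  shows "vectorspace.fin_dim class_ring ((module_vec TYPE(real) n)\<lparr>carrier := W\<rparr>)"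
proof -
  interpret vec_space "TYPE(real)" n .
  have vsW: "vectorspace class_ring (vs W)" using subspace_is_vs[OF S] .
  have subm: "submodule class_ring W V" using S unfolding subspace_def by auto
  have WV: "W \<subseteq> carrier V" using subm unfolding submodule_def by auto
  let ?P = "\<lambda>S. S \<subseteq> carrier (vs W) \<and> module.lin_indpt class_ring (vs W) S"
  have bnd: "finite S \<and> card S \<le> dim" if "?P S" for S
  proof -
    have SW: "S \<subseteq> W" using that by simp
    have "\<not> lin_dep S" using that span_li_not_depend(2)[OF SW subm] by simp
    then show ?thesis using li_le_dim[OF fin_dim, of S] SW WV by auto
  qed
  obtain \<beta> where "finite \<beta>" "basis \<beta>" using finite_basis_exists[OF fin_dim] by auto
  then have "lin_indpt {}" using subset_li_is_li[of \<beta> "{}"] unfolding basis_def by auto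
  then have P0: "?P {}" using span_li_not_depend(2)[of "{}" W, OF _ subm] by simp
  from maximal_exists[of ?P, OF bnd P0] obtain A where A: "finite A" "maximal A ?P" by auto
  have "vectorspace.basis class_ring (vs W) A" using vectorspace.max_li_is_basis[OF vsW A(2)] .
  then show ?thesis using A(1) vectorspace.fin_dim_def[OF vsW] vectorspace.basis_def[OF vsW] by auto
qed

lemma subspace_dim0_iff:
  fixes W :: "real vec set"
  assumes S: "subspace class_ring W (module_vec TYPE(real) n)"
  shows "subspace_dim n W = 0 \<longleftrightarrow> W = {0\<^sub>v n}"
proof -
  interpret vec_space "TYPE(real)" n .
  have vsW: "vectorspace class_ring (vs W)" using subspace_is_vs[OF S] .
  have subm: "submodule class_ring W V" using S unfolding subspace_def by auto
  have sp: "LinearCombinations.module.span class_ring (vs W) {} = {0\<^sub>v n}"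
    using span_li_not_depend(1)[of "{}" W, OF _ subm] span_empty by simp
  obtain \<beta> where "finite \<beta>" "basis \<beta>" using finite_basis_exists[OF fin_dim] by auto
  then have li0: "lin_indpt {}" using subset_li_is_li[of \<beta> "{}"] unfolding basis_def by auto
  then have li0W: "module.lin_indpt class_ring (vs W) {}" using span_li_not_depend(2)[of "{}" W, OF _ subm] by simp
  show ?thesis
  proof
    assume d: "subspace_dim n W = 0"
    obtain B where B: "finite B" "vectorspace.basis class_ring (vs W) B"
      using vectorspace.finite_basis_exists[OF vsW subspace_fin_dim[OF S]] by auto
    have "vectorspace.dim class_ring (vs W) = card B" using vectorspace.dim_basis[OF vsW B] .
    then have "B = {}" using d B(1) unfolding subspace_dim_def by simp
    then show "W = {0\<^sub>v n}" using B(2) sp unfolding vectorspace.basis_def[OF vsW] by simp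
  next
    assume W: "W = {0\<^sub>v n}"
    have "vectorspace.basis class_ring (vs W) {}"
      unfolding vectorspace.basis_def[OF vsW] using li0W sp W by simp
    then show "subspace_dim n W = 0"
      using vectorspace.dim_basis[OF vsW] unfolding subspace_dim_def by fastforce
  qed
qed



lemma fs_props:
  assumes "finite T" "T \<subseteq> carrier_vec m"
  shows "finsum_vec TYPE(real) m (\<lambda>x. a x \<cdot>\<^sub>v x) T \<in> carrier_vec m"
    "i < m \<Longrightarrow> finsum_vec TYPE(real) m (\<lambda>x. a x \<cdot>\<^sub>v x) T $ i = (\<Sum>t\<in>T. a t * t $ i)"
proof -
  have f: "(\<lambda>x. a x \<cdot>\<^sub>v x) \<in> T \<rightarrow> carrier_vec m" using assms by auto
  show "finsum_vec TYPE(real) m (\<lambda>x. a x \<cdot>\<^sub>v x) T \<in> carrier_vec m" using finsum_vec_closed[OF f] .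
  assume i: "i < m"
  have "finsum_vec TYPE(real) m (\<lambda>x. a x \<cdot>\<^sub>v x) T $ i = (\<Sum>f\<in>T. (a f \<cdot>\<^sub>v f) $ i)"
    by (rule index_finsum_vec[OF assms(1) i f])
  also have "\<dots> = (\<Sum>t\<in>T. a t * t $ i)"
    by (rule sum.cong) (use assms i in auto)
  finally show "finsum_vec TYPE(real) m (\<lambda>x. a x \<cdot>\<^sub>v x) T $ i = (\<Sum>t\<in>T. a t * t $ i)" .
qed

lemma aff_hull_carrier: "S \<subseteq> carrier_vec m \<Longrightarrow> aff_hull_vec m S \<subseteq> carrier_vec m"
  unfolding aff_hull_vec_def using fs_props(1) by blast

lemma fs_single: assumes sc: "s \<in> carrier_vec m"
  shows "finsum_vec TYPE(real) m (\<lambda>x. a x \<cdot>\<^sub>v x) {s} = a s \<cdot>\<^sub>v s"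
proof (rule eq_vecI)
  have c: "finsum_vec TYPE(real) m (\<lambda>x. a x \<cdot>\<^sub>v x) {s} \<in> carrier_vec m" using fs_props(1)[of "{s}" m a] sc by auto
  show "dim_vec (finsum_vec TYPE(real) m (\<lambda>x. a x \<cdot>\<^sub>v x) {s}) = dim_vec (a s \<cdot>\<^sub>v s)"
    using carrier_vecD[OF c] sc by simp
  fix i assume "i < dim_vec (a s \<cdot>\<^sub>v s)"
  then have i: "i < m" using sc by simp
  show "finsum_vec TYPE(real) m (\<lambda>x. a x \<cdot>\<^sub>v x) {s} $ i = (a s \<cdot>\<^sub>v s) $ i"
    using fs_props(2)[of "{s}" m i a] sc i by simp
qed

lemma aff_hull_mem: assumes "S \<subseteq> carrier_vec m" "s \<in> S" shows "s \<in> aff_hull_vec m S"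
proof -
  have sc: "s \<in> carrier_vec m" using assms by auto
  have "finsum_vec TYPE(real) m (\<lambda>x. (\<lambda>_. 1::real) x \<cdot>\<^sub>v x) {s} = s"
    using fs_single[OF sc, of "\<lambda>_. 1"] sc by simp
  then show ?thesis unfolding aff_hull_vec_def using assms
    by (intro CollectI exI[of _ "{s}"] exI[of _ "\<lambda>_. 1::real"]) auto
qed

lemma aff_hull_single: assumes "s \<in> carrier_vec m" shows "aff_hull_vec m {s} = {s}"
proof
  show "{s} \<subseteq> aff_hull_vec m {s}" using aff_hull_mem[of "{s}" m s] assms by auto
  show "aff_hull_vec m {s} \<subseteq> {s}"
  proof
    fix v assume "v \<in> aff_hull_vec m {s}"
    then obtain T a where T: "T \<subseteq> {s}" "T \<noteq> {}" "sum a T = 1"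
      and v: "v = finsum_vec TYPE(real) m (\<lambda>x. a x \<cdot>\<^sub>v x) T" unfolding aff_hull_vec_def by auto
    have Ts: "T = {s}" using T by auto
    have "a s = 1" using T(3) Ts by simp
    then have "v = s" unfolding v Ts fs_single[OF assms] using assms by simp
    then show "v \<in> {s}" by simp
  qed
qed

lemma aff_hull_comb:
  assumes S: "S \<subseteq> carrier_vec m" and x: "x \<in> aff_hull_vec m S" and y: "y \<in> aff_hull_vec m S"
    and z: "z \<in> aff_hull_vec m S"
  shows "x + r \<cdot>\<^sub>v (y - z) \<in> aff_hull_vec m S"
proof -
  obtain Tx ax where Tx: "finite Tx" "Tx \<subseteq> S" "Tx \<noteq> {}" "sum ax Tx = 1"
    and xd: "x = finsum_vec TYPE(real) m (\<lambda>v. ax v \<cdot>\<^sub>v v) Tx" using x unfolding aff_hull_vec_def by auto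
  obtain Ty ay where Ty: "finite Ty" "Ty \<subseteq> S" "Ty \<noteq> {}" "sum ay Ty = 1"
    and yd: "y = finsum_vec TYPE(real) m (\<lambda>v. ay v \<cdot>\<^sub>v v) Ty" using y unfolding aff_hull_vec_def by auto
  obtain Tz az where Tz: "finite Tz" "Tz \<subseteq> S" "Tz \<noteq> {}" "sum az Tz = 1"
    and zd: "z = finsum_vec TYPE(real) m (\<lambda>v. az v \<cdot>\<^sub>v v) Tz" using z unfolding aff_hull_vec_def by auto
  define T where "T = Tx \<union> Ty \<union> Tz"
  define ex where "ex f A v = (if v \<in> A then f v else (0::real))" for f and A :: "real vec set" and v
  define a where "a v = ex ax Tx v + r * ex ay Ty v - r * ex az Tz v" for v
  have fT: "finite T" and TS: "T \<subseteq> S" and Tne: "T \<noteq> {}" using Tx Ty Tz unfolding T_def by auto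
  have TC: "T \<subseteq> carrier_vec m" using TS S by auto
  have exsum: "(\<Sum>t\<in>T. ex f A t * g t) = (\<Sum>t\<in>A. f t * g t)" if "A \<subseteq> T" for f A and g :: "real vec \<Rightarrow> real"
  proof -
    have "(\<Sum>t\<in>T. ex f A t * g t) = (\<Sum>t\<in>T. if t \<in> A then f t * g t else 0)"
      unfolding ex_def by (rule sum.cong) auto
    also have "\<dots> = (\<Sum>t\<in>T \<inter> A. f t * g t)" using fT by (simp add: sum.inter_restrict)
    also have "T \<inter> A = A" using that by auto
    finally show ?thesis .
  qed
  have sub: "Tx \<subseteq> T" "Ty \<subseteq> T" "Tz \<subseteq> T" unfolding T_def by auto
  have lin: "(\<Sum>t\<in>T. a t * g t) = (\<Sum>t\<in>Tx. ax t * g t) + r * (\<Sum>t\<in>Ty. ay t * g t) - r * (\<Sum>t\<in>Tz. az t * g t)"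
    for g :: "real vec \<Rightarrow> real"
  proof -
    have "(\<Sum>t\<in>T. a t * g t) = (\<Sum>t\<in>T. ex ax Tx t * g t + r * (ex ay Ty t * g t) - r * (ex az Tz t * g t))"
      unfolding a_def by (rule sum.cong) (simp_all add: algebra_simps)
    also have "\<dots> = (\<Sum>t\<in>T. ex ax Tx t * g t) + r * (\<Sum>t\<in>T. ex ay Ty t * g t) - r * (\<Sum>t\<in>T. ex az Tz t * g t)"
      unfolding sum_subtractf sum.distrib sum_distrib_left ..
    also have "\<dots> = (\<Sum>t\<in>Tx. ax t * g t) + r * (\<Sum>t\<in>Ty. ay t * g t) - r * (\<Sum>t\<in>Tz. az t * g t)"
      unfolding exsum[OF sub(1)] exsum[OF sub(2)] exsum[OF sub(3)] ..
    finally show ?thesis .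
  qed
  have "sum a T = 1" using lin[of "\<lambda>_. 1"] Tx(4) Ty(4) Tz(4) by simp
  moreover have "x + r \<cdot>\<^sub>v (y - z) = finsum_vec TYPE(real) m (\<lambda>v. a v \<cdot>\<^sub>v v) T"
  proof (rule eq_vecI)
    have xc: "x \<in> carrier_vec m" and yc: "y \<in> carrier_vec m" and zc: "z \<in> carrier_vec m"
      using x y z aff_hull_carrier[OF S] by auto
    have fc: "finsum_vec TYPE(real) m (\<lambda>v. a v \<cdot>\<^sub>v v) T \<in> carrier_vec m" by (rule fs_props(1)[OF fT TC])
    show "dim_vec (x + r \<cdot>\<^sub>v (y - z)) = dim_vec (finsum_vec TYPE(real) m (\<lambda>v. a v \<cdot>\<^sub>v v) T)"
      using carrier_vecD[OF fc] xc yc zc by simp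
    fix i assume "i < dim_vec (finsum_vec TYPE(real) m (\<lambda>v. a v \<cdot>\<^sub>v v) T)"
    then have i: "i < m" using carrier_vecD[OF fc] by simp
    have hx: "x $ i = (\<Sum>t\<in>Tx. ax t * t $ i)" unfolding xd
      by (rule fs_props(2)[OF Tx(1) _ i]) (use Tx(2) S in blast)
    have hy: "y $ i = (\<Sum>t\<in>Ty. ay t * t $ i)" unfolding yd
      by (rule fs_props(2)[OF Ty(1) _ i]) (use Ty(2) S in blast)
    have hz: "z $ i = (\<Sum>t\<in>Tz. az t * t $ i)" unfolding zd
      by (rule fs_props(2)[OF Tz(1) _ i]) (use Tz(2) S in blast)
    have "finsum_vec TYPE(real) m (\<lambda>v. a v \<cdot>\<^sub>v v) T $ i = (\<Sum>t\<in>T. a t * t $ i)" using fs_props(2)[OF fT TC i] .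
    also have "\<dots> = x $ i + r * (y $ i - z $ i)" unfolding lin hx hy hz by (simp add: algebra_simps)
    also have "\<dots> = (x + r \<cdot>\<^sub>v (y - z)) $ i" using xc yc zc i by simp
    finally show "(x + r \<cdot>\<^sub>v (y - z)) $ i = finsum_vec TYPE(real) m (\<lambda>v. a v \<cdot>\<^sub>v v) T $ i" by simp
  qed
  ultimately show ?thesis unfolding aff_hull_vec_def
    by (intro CollectI exI[of _ T] exI[of _ a] conjI fT TS Tne) auto
qed



lemma vec_diff_eqI: fixes x y :: "real vec" assumes "x \<in> carrier_vec m" "y \<in> carrier_vec m" "x - y = 0\<^sub>v m" shows "x = y"
proof (rule eq_vecI)
  show "dim_vec x = dim_vec y" using assms by simp
  fix i assume "i < dim_vec y"
  then have i: "i < m" using assms by simp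
  have "x $ i - y $ i = 0" using arg_cong[OF assms(3), of "\<lambda>v. v $ i"] assms(1,2) i by simp
  then show "x $ i = y $ i" by simp
qed

lemma Dmem: "x \<in> H \<Longrightarrow> y \<in> H \<Longrightarrow> v = x - y \<Longrightarrow> v \<in> {x - y | x y. x \<in> H \<and> y \<in> H}"
  unfolding mem_Collect_eq by (rule exI[of _ x], rule exI[of _ y]) simp

lemma aff_diff_subspace:
  assumes S: "S \<subseteq> carrier_vec m" and ne: "S \<noteq> {}"
  shows "subspace class_ring {x - y | x y. x \<in> aff_hull_vec m S \<and> y \<in> aff_hull_vec m S} (module_vec TYPE(real) m)"
proof -
  let ?H = "aff_hull_vec m S"
  let ?D = "{x - y | x y. x \<in> ?H \<and> y \<in> ?H}"
  have HC: "?H \<subseteq> carrier_vec m" by (rule aff_hull_carrier[OF S])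
  obtain s where s: "s \<in> S" using ne by auto
  have sH: "s \<in> ?H" using aff_hull_mem[OF S s] .
  show ?thesis
  proof (rule subspace_vecI)
    show "?D \<subseteq> carrier_vec m"
    proof
      fix v assume "v \<in> ?D"
      then obtain x y where "x \<in> ?H" "y \<in> ?H" "v = x - y" by auto
      then show "v \<in> carrier_vec m" using HC minus_carrier_vec by (metis subsetD)
    qed
    have "s - s = 0\<^sub>v m" using sH HC by (intro eq_vecI) auto
    then show "0\<^sub>v m \<in> ?D" using Dmem[OF sH sH] by simp
  next
    fix a b assume "a \<in> ?D" "b \<in> ?D"
    then obtain x y x' y' where xy: "x \<in> ?H" "y \<in> ?H" "x' \<in> ?H" "y' \<in> ?H" and ab: "a = x - y" "b = x' - y'" by auto
    have m: "x + 1 \<cdot>\<^sub>v (x' - y') \<in> ?H" using aff_hull_comb[OF S xy(1) xy(3) xy(4)] .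
    have c: "x \<in> carrier_vec m" "y \<in> carrier_vec m" "x' \<in> carrier_vec m" "y' \<in> carrier_vec m" using xy HC by auto
    have "a + b = (x + 1 \<cdot>\<^sub>v (x' - y')) - y" unfolding ab using c by (intro eq_vecI) auto
    then show "a + b \<in> ?D" using Dmem[OF m xy(2)] by simp
  next
    fix r a assume "a \<in> ?D"
    then obtain x y where xy: "x \<in> ?H" "y \<in> ?H" and ab: "a = x - y" by auto
    have m: "y + r \<cdot>\<^sub>v (x - y) \<in> ?H" using aff_hull_comb[OF S xy(2) xy(1) xy(2)] .
    have c: "x \<in> carrier_vec m" "y \<in> carrier_vec m" using xy HC by auto
    have "r \<cdot>\<^sub>v a = (y + r \<cdot>\<^sub>v (x - y)) - y" unfolding ab using c by (intro eq_vecI) (auto simp: algebra_simps)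
    then show "r \<cdot>\<^sub>v a \<in> ?D" using Dmem[OF m xy(2)] by simp
  qed
qed

lemma aff_dim0_iff:
  assumes S: "S \<subseteq> carrier_vec m" and ne: "S \<noteq> {}"
  shows "aff_dim_vec m S = 0 \<longleftrightarrow> (\<exists>s. S = {s})"
proof -
  let ?H = "aff_hull_vec m S"
  let ?D = "{x - y | x y. x \<in> ?H \<and> y \<in> ?H}"
  have sub: "subspace class_ring ?D (module_vec TYPE(real) m)" by (rule aff_diff_subspace[OF S ne])
  have HC: "?H \<subseteq> carrier_vec m" by (rule aff_hull_carrier[OF S])
  have ad: "aff_dim_vec m S = int (subspace_dim m ?D)" unfolding aff_dim_vec_def using ne by simp
  show ?thesis
  proof
    assume "aff_dim_vec m S = 0"
    then have D0: "?D = {0\<^sub>v m}" using subspace_dim0_iff[OF sub] ad by simp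
    have eq: "s1 = s2" if "s1 \<in> S" "s2 \<in> S" for s1 s2
    proof -
      have "s1 - s2 \<in> ?D" by (rule Dmem[OF aff_hull_mem[OF S that(1)] aff_hull_mem[OF S that(2)]]) simp
      then have "s1 - s2 = 0\<^sub>v m" unfolding D0 by simp
      then show ?thesis using vec_diff_eqI that S by (meson subsetD)
    qed
    obtain s where "s \<in> S" using ne by auto
    then have "S = {s}" using eq by auto
    then show "\<exists>s. S = {s}" by (rule exI)
  next
    assume "\<exists>s. S = {s}"
    then obtain s where Ss: "S = {s}" by auto
    have sc: "s \<in> carrier_vec m" using S Ss by auto
    have H: "?H = {s}" unfolding Ss using aff_hull_single[OF sc] .
    have "s - s = 0\<^sub>v m" using sc by (intro eq_vecI) auto
    then have "?D = {0\<^sub>v m}" unfolding H by auto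
    then show "aff_dim_vec m S = 0" using subspace_dim0_iff[OF sub] ad by simp
  qed
qed



lemma mat_kernel_subspace:
  fixes A :: "real mat"
  assumes A: "A \<in> carrier_mat r c"
  shows "subspace class_ring (mat_kernel A) (module_vec TYPE(real) c)"
proof (rule subspace_vecI)
  show "mat_kernel A \<subseteq> carrier_vec c" by (rule mat_kernel_carrier[OF A])
  have "A *\<^sub>v 0\<^sub>v c = 0\<^sub>v r" using A by (intro eq_vecI) auto
  then show "0\<^sub>v c \<in> mat_kernel A" by (intro mat_kernelI[OF A]) auto
  fix a b assume a: "a \<in> mat_kernel A" and b: "b \<in> mat_kernel A"
  have "A *\<^sub>v (a + b) = A *\<^sub>v a + A *\<^sub>v b"
    using mat_kernelD(1)[OF A a] mat_kernelD(1)[OF A b] by (rule mult_add_distrib_mat_vec[OF A])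
  also have "\<dots> = 0\<^sub>v r" using mat_kernelD(2)[OF A a] mat_kernelD(2)[OF A b] by simp
  finally show "a + b \<in> mat_kernel A" using mat_kernelD(1)[OF A a] mat_kernelD(1)[OF A b]
    by (intro mat_kernelI[OF A]) auto
next
  fix t a assume a: "a \<in> mat_kernel A"
  show "t \<cdot>\<^sub>v a \<in> mat_kernel A" by (rule mat_kernel_smult[OF A a])
qed

lemma kernel_dim_subspace_dim:
  fixes A :: "real mat"
  shows "kernel_dim A = subspace_dim (dim_col A) (mat_kernel A)"
  unfolding kernel_dim_def subspace_dim_def by simp

lemma kernel_zero:
  fixes A :: "real mat"
  assumes A: "A \<in> carrier_mat r c" and d: "kernel_dim A = 0"
  shows "mat_kernel A = {0\<^sub>v c}"
  using subspace_dim0_iff[OF mat_kernel_subspace[OF A]] d A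
  unfolding kernel_dim_subspace_dim by simp


lemma orth_image:
  fixes M :: "real mat"
  assumes M: "M \<in> carrier_mat n k"
  shows "orth_compl n {M *\<^sub>v z | z. z \<in> carrier_vec k} = mat_kernel (transpose_mat M)"
proof -
  have Mt: "transpose_mat M \<in> carrier_mat k n" using M by simp
  show ?thesis
  proof (intro equalityI subsetI)
    fix v assume v: "v \<in> orth_compl n {M *\<^sub>v z | z. z \<in> carrier_vec k}"
    then have vc: "v \<in> carrier_vec n" and orth: "\<And>z. z \<in> carrier_vec k \<Longrightarrow> v \<bullet> (M *\<^sub>v z) = 0"
      unfolding orth_compl_def by auto
    have "transpose_mat M *\<^sub>v v = 0\<^sub>v k"
    proof (rule eq_vecI)
      show "dim_vec (transpose_mat M *\<^sub>v v) = dim_vec (0\<^sub>v k)" using M by simp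
      fix j assume "j < dim_vec (0\<^sub>v k)"
      then have j: "j < k" by simp
      have "(transpose_mat M *\<^sub>v v) $ j = (transpose_mat M *\<^sub>v v) \<bullet> unit_vec k j" using j by simp
      also have "\<dots> = v \<bullet> (M *\<^sub>v unit_vec k j)" by (rule transpose_vec_mult_scalar[OF M _ vc]) (use j in simp)
      also have "\<dots> = 0" using orth[of "unit_vec k j"] j by simp
      finally show "(transpose_mat M *\<^sub>v v) $ j = 0\<^sub>v k $ j" using j by simp
    qed
    then show "v \<in> mat_kernel (transpose_mat M)" by (intro mat_kernelI[OF Mt vc])
  next
    fix v assume v: "v \<in> mat_kernel (transpose_mat M)"
    have vc: "v \<in> carrier_vec n" and z: "transpose_mat M *\<^sub>v v = 0\<^sub>v k" using mat_kernelD[OF Mt v] by auto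
    have "v \<bullet> (M *\<^sub>v z) = 0" if zc: "z \<in> carrier_vec k" for z
    proof -
      have "v \<bullet> (M *\<^sub>v z) = (transpose_mat M *\<^sub>v v) \<bullet> z" by (rule transpose_vec_mult_scalar[OF M zc vc, symmetric])
      also have "\<dots> = 0" unfolding z using zc by simp
      finally show ?thesis .
    qed
    then show "v \<in> orth_compl n {M *\<^sub>v z | z. z \<in> carrier_vec k}" unfolding orth_compl_def using vc by auto
  qed
qed


lemma left_inverse_from_kernel:
  fixes M Ms :: "real mat"
  assumes M: "M \<in> carrier_mat n k" and Ms: "Ms \<in> carrier_mat k n"
    and g: "M * Ms * M = M" and ker: "mat_kernel M = {0\<^sub>v k}"
  shows "Ms * M = 1\<^sub>m k"
proof -
  have MsM: "Ms * M \<in> carrier_mat k k" using M Ms by simp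
  have act: "(Ms * M) *\<^sub>v z = z" if z: "z \<in> carrier_vec k" for z
  proof -
    have "M *\<^sub>v ((Ms * M) *\<^sub>v z - z) = M *\<^sub>v ((Ms * M) *\<^sub>v z) - M *\<^sub>v z"
      by (rule mult_minus_distrib_mat_vec[OF M]) (use z MsM in auto)
    also have "M *\<^sub>v ((Ms * M) *\<^sub>v z) = (M * (Ms * M)) *\<^sub>v z" using M MsM z by simp
    also have "M * (Ms * M) = M" using g assoc_mult_mat[OF M Ms M] by simp
    finally have "M *\<^sub>v ((Ms * M) *\<^sub>v z - z) = M *\<^sub>v z - M *\<^sub>v z" .
    also have "\<dots> = 0\<^sub>v n" using M z by (intro eq_vecI) auto
    finally have "(Ms * M) *\<^sub>v z - z \<in> mat_kernel M" using M z MsM by (intro mat_kernelI[OF M]) auto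
    then have "(Ms * M) *\<^sub>v z - z = 0\<^sub>v k" using ker by simp
    then show ?thesis using vec_diff_eqI[of "(Ms * M) *\<^sub>v z" k z] MsM z by simp
  qed
  show ?thesis
  proof (rule eq_matI)
    fix i j assume i: "i < dim_row (1\<^sub>m k)" and j: "j < dim_col (1\<^sub>m k)"
    have "(Ms * M) $$ (i, j) = ((Ms * M) *\<^sub>v unit_vec k j) $ i"
      using i j MsM Ms M by (simp add: mult_mat_vec_def carrier_matD)
    also have "\<dots> = unit_vec k j $ i" using act[of "unit_vec k j"] j by simp
    also have "\<dots> = 1\<^sub>m k $$ (i, j)" using i j by simp
    finally show "(Ms * M) $$ (i, j) = 1\<^sub>m k $$ (i, j)" .
  qed (use MsM in auto)
qed



theorem corollary6:
  fixes n :: nat and B :: "real mat" and c :: "real vec" and ms :: "nat list"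
    and Cs :: "nat \<Rightarrow> real vec set" and Mstar :: "real mat"
  assumes B: "B \<in> carrier_mat n (sum_list ms)"
    and c: "c \<in> pos_vecs (sum_list ms)"
    and ms_pos: "\<forall>i<length ms. ms ! i > 0"
    and Cs: "\<forall>i<length ms. Cs i \<subseteq> pos_vecs (ms ! i) \<and> is_cone (Cs i)"
    and C_ne: "prod_set ms Cs \<noteq> {}"
    and Mstar: "Mstar \<in> carrier_mat (sum_list ms - length ms) n"
    and ginv: "Mmat B ms * Mstar * Mmat B ms = Mmat B ms"
    and d0: "kernel_dim (Mmat B ms) = 0"
  shows "Zset n B c ms Cs =
           {had (vpow (had y (vinv c)) (Imat ms * Mstar)) (vexp v) | y v.
              y \<in> Pset ms Cs \<and> v \<in> orth_compl n (Lspace B ms)}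
         \<and> Zset n B c ms Cs \<noteq> {}
         \<and> ((\<exists>!x. x \<in> Zset n B c ms Cs) \<longleftrightarrow>
              aff_dim_vec (sum_list ms) (Pset ms Cs) = 0 \<and>
              subspace_dim n (orth_compl n (Lspace B ms)) = 0)"
proof -
  let ?m = "sum_list ms"
  let ?k = "sum_list ms - length ms"
  let ?I = "Imat ms"
  let ?M = "Mmat B ms"
  let ?E = "Imat ms * Mstar"
  let ?It = "transpose_mat (Imat ms)"
  let ?Bt = "transpose_mat B"
  let ?Mt = "transpose_mat (Mmat B ms)"
  let ?Mst = "transpose_mat Mstar"
  let ?Et = "transpose_mat (Imat ms * Mstar)"
  let ?P = "Pset ms Cs"
  let ?Lp = "orth_compl n (Lspace B ms)"
  let ?Z = "Zset n B c ms Cs"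
  let ?R = "{had (vpow (had y (vinv c)) (Imat ms * Mstar)) (vexp v) | y v. y \<in> Pset ms Cs \<and> v \<in> orth_compl n (Lspace B ms)}"
  let ?rep = "\<lambda>y v. had (vpow (had y (vinv c)) (Imat ms * Mstar)) (vexp v)"
  have msp': "\<forall>a\<in>set ms. 0 < a" using ms_pos by (auto simp: in_set_conv_nth)
  have Cs': "\<forall>i<length ms. Cs i \<subseteq> pos_vecs (ms ! i)" using Cs by auto
  have Ic: "?I \<in> carrier_mat ?m ?k"
    using sum_list_minus1[OF msp'] by (intro carrier_matI) (simp_all add: Imat_dims)
  have Mc: "?M \<in> carrier_mat n ?k" unfolding Mmat_def by (rule mult_carrier_mat[OF B Ic])
  have Ec: "?E \<in> carrier_mat ?m n" by (rule mult_carrier_mat[OF Ic Mstar])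
  have Itc: "?It \<in> carrier_mat ?k ?m" using Ic by (simp only: transpose_carrier_mat)
  have Btc: "?Bt \<in> carrier_mat ?m n" using B by simp
  have Mtc: "?Mt \<in> carrier_mat ?k n" using Mc by simp
  have Mstc: "?Mst \<in> carrier_mat n ?k" using Mstar by simp
  have Mt_eq: "?Mt = ?It * ?Bt" unfolding Mmat_def by (rule transpose_mult[OF B Ic])
  have Et_eq: "?Et = ?Mst * ?It" by (rule transpose_mult[OF Ic Mstar])
  have ker: "mat_kernel ?M = {0\<^sub>v ?k}" by (rule kernel_zero[OF Mc d0])
  have linv: "Mstar * ?M = 1\<^sub>m ?k" by (rule left_inverse_from_kernel[OF Mc Mstar ginv ker])
  have MtMst: "?Mt * ?Mst = 1\<^sub>m ?k"
    using transpose_mult[OF Mstar Mc] linv by simp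
  have Lperp: "?Lp = mat_kernel ?Mt" unfolding Lspace_def by (rule orth_image[OF Mc])
  have cc: "c \<in> carrier_vec ?m" using c by (auto simp: pos_vecs_def)
  have lcc: "lnv c \<in> carrier_vec ?m" using cc by simp
  have rep: "?rep y v = vexp (?Et *\<^sub>v (lnv y - lnv c) + v)"
    if y: "y \<in> pos_vecs ?m" and v: "v \<in> carrier_vec n" for y v
  proof -
    have yc: "y \<in> carrier_vec ?m" using y by (auto simp: pos_vecs_def)
    have "vpow (had y (vinv c)) ?E = vexp (?Et *\<^sub>v lnv (had y (vinv c)))"
      by (rule vpow_eq[OF had_vinv_pos[OF y c] Ec])
    also have "lnv (had y (vinv c)) = lnv y - lnv c" by (rule lnv_had_vinv[OF y c])
    finally have "?rep y v = had (vexp (?Et *\<^sub>v (lnv y - lnv c))) (vexp v)" by simp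
    also have "\<dots> = vexp (?Et *\<^sub>v (lnv y - lnv c) + v)"
      by (rule had_vexp[of _ n]) (use Ec yc lcc v in auto)
    finally show ?thesis .
  qed
  have zform: "had c (vpow x B) = vexp (lnv c + ?Bt *\<^sub>v lnv x)" if x: "x \<in> pos_vecs n" for x
  proof -
    have xc: "x \<in> carrier_vec n" using x by (auto simp: pos_vecs_def)
    have "vpow x B = vexp (?Bt *\<^sub>v lnv x)" by (rule vpow_eq[OF x B])
    then show ?thesis using had_pos_vexp[OF c, of "?Bt *\<^sub>v lnv x"] Btc xc by simp
  qed
  have keyid: "?It *\<^sub>v ((lnv c + ?Bt *\<^sub>v u) - lnv y) = ?Mt *\<^sub>v u - ?It *\<^sub>v (lnv y - lnv c)"
    if u: "u \<in> carrier_vec n" and y: "y \<in> carrier_vec ?m" for u y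
  proof -
    have bu: "?Bt *\<^sub>v u \<in> carrier_vec ?m" using Btc u by simp
    have ly: "lnv y \<in> carrier_vec ?m" using y by simp
    have "(lnv c + ?Bt *\<^sub>v u) - lnv y = ?Bt *\<^sub>v u - (lnv y - lnv c)"
      using bu ly lcc y cc carrier_vecD[OF bu] by (intro eq_vecI) auto
    then have "?It *\<^sub>v ((lnv c + ?Bt *\<^sub>v u) - lnv y) = ?It *\<^sub>v (?Bt *\<^sub>v u) - ?It *\<^sub>v (lnv y - lnv c)"
      using mult_minus_distrib_mat_vec[OF Itc bu, of "lnv y - lnv c"] ly lcc by simp
    also have "?It *\<^sub>v (?Bt *\<^sub>v u) = ?Mt *\<^sub>v u" unfolding Mt_eq using Itc Btc u by simp
    finally show ?thesis .
  qed
  have ZR: "vexp (?Et *\<^sub>v (lnv y - lnv c) + v) \<in> pos_vecs n \<and>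
      ?It *\<^sub>v (lnv (had c (vpow (vexp (?Et *\<^sub>v (lnv y - lnv c) + v)) B)) - lnv y) = 0\<^sub>v ?k"
    if y: "y \<in> pos_vecs ?m" and v: "v \<in> mat_kernel ?Mt" for y v
  proof -
    have yc: "y \<in> carrier_vec ?m" using y by (auto simp: pos_vecs_def)
    have vc: "v \<in> carrier_vec n" and Mv: "?Mt *\<^sub>v v = 0\<^sub>v ?k" using mat_kernelD[OF Mtc v] by auto
    define w where "w = lnv y - lnv c"
    have wc: "w \<in> carrier_vec ?m" unfolding w_def using yc lcc by simp
    define u where "u = ?Et *\<^sub>v w + v"
    have uc: "u \<in> carrier_vec n" unfolding u_def using Ec wc vc by simp
    have xp: "vexp u \<in> pos_vecs n" by (rule vexp_pos[OF uc])
    have Iw: "?It *\<^sub>v w \<in> carrier_vec ?k" using Itc wc by simp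
    have "?Mt *\<^sub>v u = ?Mt *\<^sub>v (?Et *\<^sub>v w) + ?Mt *\<^sub>v v"
      unfolding u_def by (rule mult_add_distrib_mat_vec[OF Mtc]) (use Ec wc vc in auto)
    also have "?Mt *\<^sub>v (?Et *\<^sub>v w) = ?It *\<^sub>v w"
    proof -
      have "?Et *\<^sub>v w = ?Mst *\<^sub>v (?It *\<^sub>v w)" unfolding Et_eq using Mstc Itc wc by simp
      then have "?Mt *\<^sub>v (?Et *\<^sub>v w) = (?Mt * ?Mst) *\<^sub>v (?It *\<^sub>v w)" using Mtc Mstc Iw by simp
      then show ?thesis unfolding MtMst using Iw by simp
    qed
    finally have Mu: "?Mt *\<^sub>v u = ?It *\<^sub>v w + 0\<^sub>v ?k" unfolding Mv .
    have "?It *\<^sub>v (lnv (had c (vpow (vexp u) B)) - lnv y) = ?It *\<^sub>v ((lnv c + ?Bt *\<^sub>v u) - lnv y)"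
      unfolding zform[OF xp] by simp
    also have "\<dots> = ?Mt *\<^sub>v u - ?It *\<^sub>v w" unfolding w_def by (rule keyid[OF uc yc])
    also have "\<dots> = 0\<^sub>v ?k" unfolding Mu using Iw by (intro eq_vecI) auto
    finally show ?thesis using xp unfolding u_def w_def by simp
  qed
  have ZL: "x \<in> ?R" if x: "x \<in> ?Z" for x
  proof -
    have xp: "x \<in> pos_vecs n" and zC: "had c (vpow x B) \<in> prod_set ms Cs" using x unfolding Zset_def by auto
    have xc: "x \<in> carrier_vec n" using xp by (auto simp: pos_vecs_def)
    define u where "u = lnv x"
    have uc: "u \<in> carrier_vec n" unfolding u_def using xc by simp
    have zf: "had c (vpow x B) = vexp (lnv c + ?Bt *\<^sub>v u)" unfolding u_def by (rule zform[OF xp])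
    have zc: "lnv c + ?Bt *\<^sub>v u \<in> carrier_vec ?m" using lcc Btc uc by simp
    have zp: "had c (vpow x B) \<in> pos_vecs ?m" unfolding zf by (rule vexp_pos[OF zc])
    obtain y where yP: "y \<in> ?P" and bc: "bconst ms (lnv (had c (vpow x B)) - lnv y)"
      using lemma_A[OF Cs ms_pos zp zC] by auto
    have yp: "y \<in> pos_vecs ?m" by (rule Pset_pos[OF Cs' yP])
    have yc: "y \<in> carrier_vec ?m" using yp by (auto simp: pos_vecs_def)
    have "?It *\<^sub>v (lnv (had c (vpow x B)) - lnv y) = 0\<^sub>v ?k"
      using K_lemma[of "lnv (had c (vpow x B)) - lnv y" ms] bc ms_pos yc zp
      by (auto simp: pos_vecs_def)
    then have "?Mt *\<^sub>v u - ?It *\<^sub>v (lnv y - lnv c) = 0\<^sub>v ?k"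
      unfolding zf lnv_vexp keyid[OF uc yc] .
    then have Mu: "?Mt *\<^sub>v u = ?It *\<^sub>v (lnv y - lnv c)"
      by (rule vec_diff_eqI[rotated 2]) (use Mtc uc Itc yc lcc in auto)
    define w where "w = lnv y - lnv c"
    have wc: "w \<in> carrier_vec ?m" unfolding w_def using yc lcc by simp
    define v where "v = u - ?Et *\<^sub>v w"
    have Ew: "?Et *\<^sub>v w \<in> carrier_vec n" using Ec wc by simp
    have vc: "v \<in> carrier_vec n" unfolding v_def using uc Ew by simp
    have Iw: "?It *\<^sub>v w \<in> carrier_vec ?k" using Itc wc by simp
    have "?Mt *\<^sub>v v = ?Mt *\<^sub>v u - ?Mt *\<^sub>v (?Et *\<^sub>v w)"
      unfolding v_def by (rule mult_minus_distrib_mat_vec[OF Mtc uc Ew])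
    also have "?Mt *\<^sub>v (?Et *\<^sub>v w) = ?It *\<^sub>v w"
    proof -
      have "?Et *\<^sub>v w = ?Mst *\<^sub>v (?It *\<^sub>v w)" unfolding Et_eq using Mstc Itc wc by simp
      then have "?Mt *\<^sub>v (?Et *\<^sub>v w) = (?Mt * ?Mst) *\<^sub>v (?It *\<^sub>v w)" using Mtc Mstc Iw by simp
      then show ?thesis unfolding MtMst using Iw by simp
    qed
    also have "?Mt *\<^sub>v u - ?It *\<^sub>v w = 0\<^sub>v ?k" unfolding Mu w_def using Iw w_def by (intro eq_vecI) auto
    finally have "?Mt *\<^sub>v v = 0\<^sub>v ?k" .
    then have vL: "v \<in> ?Lp" unfolding Lperp by (intro mat_kernelI[OF Mtc vc])
    have "x = vexp u" unfolding u_def by (rule vexp_lnv[OF xp, symmetric])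
    also have "u = ?Et *\<^sub>v w + v" unfolding v_def using uc Ew carrier_vecD[OF Ew] carrier_vecD[OF uc] by (intro eq_vecI) auto
    also have "vexp (?Et *\<^sub>v w + v) = ?rep y v" unfolding w_def by (rule rep[OF yp vc, symmetric])
    finally have "x = ?rep y v" .
    then show ?thesis unfolding mem_Collect_eq
      by (intro exI[of _ y] exI[of _ v]) (use yP vL in simp)
  qed
  have ZR': "?rep y v \<in> ?Z" if yP: "y \<in> ?P" and vL: "v \<in> ?Lp" for y v
  proof -
    have yp: "y \<in> pos_vecs ?m" by (rule Pset_pos[OF Cs' yP])
    have yc: "y \<in> carrier_vec ?m" using yp by (auto simp: pos_vecs_def)
    have vk: "v \<in> mat_kernel ?Mt" using vL Lperp by simp
    have vc: "v \<in> carrier_vec n" using mat_kernelD[OF Mtc vk] by auto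
    let ?x = "vexp (?Et *\<^sub>v (lnv y - lnv c) + v)"
    have xp: "?x \<in> pos_vecs n" and It0: "?It *\<^sub>v (lnv (had c (vpow ?x B)) - lnv y) = 0\<^sub>v ?k"
      using ZR[OF yp vk] by auto
    have xcc: "?x \<in> carrier_vec n" using xp by (auto simp: pos_vecs_def)
    have lx: "lnv ?x \<in> carrier_vec n" by (rule lnv_carrier[OF xcc])
    have zp: "had c (vpow ?x B) \<in> pos_vecs ?m"
      unfolding zform[OF xp] by (rule vexp_pos, rule add_carrier_vec[OF lcc], rule mult_mat_vec_carrier[OF Btc lx])
    have "bconst ms (lnv (had c (vpow ?x B)) - lnv y)"
      using K_lemma[of "lnv (had c (vpow ?x B)) - lnv y" ms] It0 ms_pos yc zp by (auto simp: pos_vecs_def)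
    then have "had c (vpow ?x B) \<in> prod_set ms Cs" by (rule lemma_B[OF Cs yP zp _ ms_pos])
    then have "?x \<in> ?Z" unfolding Zset_def using xp by auto
    then show ?thesis using rep[OF yp vc] by simp
  qed
  have eqZ: "?Z = ?R"
  proof (intro equalityI subsetI)
    fix x assume "x \<in> ?Z" then show "x \<in> ?R" by (rule ZL)
  next
    fix x assume "x \<in> ?R"
    then obtain y v where "x = ?rep y v" "y \<in> ?P" "v \<in> ?Lp" unfolding mem_Collect_eq by blast
    then show "x \<in> ?Z" using ZR' by simp
  qed
  obtain z0 where z0: "z0 \<in> prod_set ms Cs" using C_ne by auto
  have z0p: "z0 \<in> pos_vecs ?m" by (rule prod_set_pos[OF Cs' z0])
  obtain y0 where y0: "y0 \<in> ?P" using lemma_A[OF Cs ms_pos z0p z0] by auto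
  have y0p: "y0 \<in> pos_vecs ?m" by (rule Pset_pos[OF Cs' y0])
  have zk: "0\<^sub>v n \<in> mat_kernel ?Mt" using Mtc by (intro mat_kernelI[OF Mtc]) (auto intro!: eq_vecI)
  have zL: "0\<^sub>v n \<in> ?Lp" using zk Lperp by simp
  have ne: "?Z \<noteq> {}" using ZR'[OF y0 zL] by auto
  have Pne: "?P \<noteq> {}" using y0 by auto
  have Pc: "?P \<subseteq> carrier_vec ?m" using Pset_pos[OF Cs'] by (auto simp: pos_vecs_def)
  have uniq: "(\<exists>!x. x \<in> ?Z) \<longleftrightarrow> aff_dim_vec ?m ?P = 0 \<and> subspace_dim n ?Lp = 0"
  proof
    assume ex1: "\<exists>!x. x \<in> ?Z"
    then have same: "x1 = x2" if "x1 \<in> ?Z" "x2 \<in> ?Z" for x1 x2 using that by auto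
    have Psing: "y1 = y2" if y1: "y1 \<in> ?P" and y2: "y2 \<in> ?P" for y1 y2
    proof -
      have p1: "y1 \<in> pos_vecs ?m" and p2: "y2 \<in> pos_vecs ?m" using Pset_pos[OF Cs'] y1 y2 by auto
      have c1: "y1 \<in> carrier_vec ?m" and c2: "y2 \<in> carrier_vec ?m" using p1 p2 by (auto simp: pos_vecs_def)
      let ?x1 = "vexp (?Et *\<^sub>v (lnv y1 - lnv c) + 0\<^sub>v n)"
      let ?x2 = "vexp (?Et *\<^sub>v (lnv y2 - lnv c) + 0\<^sub>v n)"
      have "?x1 = ?x2" using same[OF ZR'[OF y1 zL] ZR'[OF y2 zL]] rep[OF p1] rep[OF p2] by simp
      then have e1: "?It *\<^sub>v (lnv (had c (vpow ?x1 B)) - lnv y1) = 0\<^sub>v ?k"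
        and e2: "?It *\<^sub>v (lnv (had c (vpow ?x1 B)) - lnv y2) = 0\<^sub>v ?k"
        using ZR[OF p1 zk] ZR[OF p2 zk] by auto
      have x1p: "?x1 \<in> pos_vecs n" using ZR[OF p1 zk] by auto
      let ?a = "lnv (had c (vpow ?x1 B))"
      have lx1: "?Et *\<^sub>v (lnv y1 - lnv c) + 0\<^sub>v n \<in> carrier_vec n" using Ec c1 lcc by simp
      have ac: "?a \<in> carrier_vec ?m" unfolding zform[OF x1p] lnv_vexp
        by (rule add_carrier_vec[OF lcc], rule mult_mat_vec_carrier[OF Btc lx1])
      have "lnv y1 - lnv y2 = (?a - lnv y2) - (?a - lnv y1)" using ac c1 c2 by (intro eq_vecI) auto
      then have "?It *\<^sub>v (lnv y1 - lnv y2) = ?It *\<^sub>v (?a - lnv y2) - ?It *\<^sub>v (?a - lnv y1)"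
        using mult_minus_distrib_mat_vec[OF Itc, of "?a - lnv y2" "?a - lnv y1"] ac c1 c2 by simp
      also have "\<dots> = 0\<^sub>v ?k" unfolding e1 e2 by (intro eq_vecI) auto
      finally have "bconst ms (lnv y1 - lnv y2)" using K_lemma[of "lnv y1 - lnv y2" ms] ms_pos c1 c2 by simp
      then show ?thesis by (rule lemma_U[OF Cs' y1 y2])
    qed
    have "\<exists>s. ?P = {s}" using y0 Psing by blast
    then have A1: "aff_dim_vec ?m ?P = 0" using aff_dim0_iff[OF Pc Pne] by simp
    have "mat_kernel ?Mt = {0\<^sub>v n}"
    proof (intro equalityI subsetI)
      fix v assume vk: "v \<in> mat_kernel ?Mt"
      have vc: "v \<in> carrier_vec n" using mat_kernelD[OF Mtc vk] by auto
      have vL: "v \<in> ?Lp" using vk Lperp by simp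
      have "vexp (?Et *\<^sub>v (lnv y0 - lnv c) + v) = vexp (?Et *\<^sub>v (lnv y0 - lnv c) + 0\<^sub>v n)"
        using same[OF ZR'[OF y0 vL] ZR'[OF y0 zL]] rep[OF y0p vc] rep[OF y0p] by simp
      then have e: "?Et *\<^sub>v (lnv y0 - lnv c) + v = ?Et *\<^sub>v (lnv y0 - lnv c) + 0\<^sub>v n" by (rule vexp_inj)
      have "v = 0\<^sub>v n"
      proof (rule eq_vecI)
        show "dim_vec v = dim_vec (0\<^sub>v n)" using vc by simp
        fix i assume "i < dim_vec (0\<^sub>v n)"
        then have i: "i < n" by simp
        have "(?Et *\<^sub>v (lnv y0 - lnv c) + v) $ i = (?Et *\<^sub>v (lnv y0 - lnv c) + 0\<^sub>v n) $ i" using e by simp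
        then show "v $ i = 0\<^sub>v n $ i" using i vc Ec by simp
      qed
      then show "v \<in> {0\<^sub>v n}" by simp
    qed (use zk in auto)
    then have A2: "subspace_dim n ?Lp = 0"
      using subspace_dim0_iff[OF mat_kernel_subspace[OF Mtc]] Lperp by simp
    show "aff_dim_vec ?m ?P = 0 \<and> subspace_dim n ?Lp = 0" using A1 A2 by simp
  next
    assume "aff_dim_vec ?m ?P = 0 \<and> subspace_dim n ?Lp = 0"
    then have A1: "aff_dim_vec ?m ?P = 0" and A2: "subspace_dim n ?Lp = 0" by auto
    obtain s where Ps: "?P = {s}" using A1 aff_dim0_iff[OF Pc Pne] by auto
    have L0: "?Lp = {0\<^sub>v n}"
      using A2 subspace_dim0_iff[OF mat_kernel_subspace[OF Mtc]] Lperp by simp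
    have "?R = {?rep s (0\<^sub>v n)}" unfolding Ps L0 by auto
    then show "\<exists>!x. x \<in> ?Z" unfolding eqZ by auto
  qed
  show ?thesis by (intro conjI eqZ ne uniq)
qed


end
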